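(* Let $(\Omega,\mathcal{F},\mathbb{P})$ be a complete probability space, $c$ a random cost vector in a compact convex $\mathcal{C}\subseteq\mathbb{R}^d$ with $\mathbb{E}[\|c\|^2]<\infty$ and absolutely continuous law, $\mathcal{Z}\subseteq\mathbb{R}^d$ non-empty compact (full-row-rank constraint matrix if polyhedral), and $\pi^*:\mathcal{C}\to\mathcal{Z}$ measurable, $L$-Lipschitz, with $\mathbb{E}[\|\pi^*(c)\|^2]<\infty$ and $\pi^*(c)\in\arg\min_{z\in\mathcal{Z}}c^\top z$ a.s. Let $\hat{\mathbb{E}}[c]$ be an estimator of $\mathbb{E}[c]$ based on an i.i.d. sample of size $n$ satisfying $\hat{\mathbb{E}}[c]\to\mathbb{E}[c]$ in probability, $\|\hat{\mathbb{E}}[c]-\mathbb{E}[c]\|=\mathcal{O}_P(n^{-1/2})$, and $\sqrt n(\hat{\mathbb{E}}[c]-\mathbb{E}[c])\to\mathcal{N}(0,\Sigma_c)$ in distribution. Then $$\mathrm{Regret}(c,\pi^*(\hat{\mathbb{E}}[c]))=\mathrm{Cov}(c,\pi^*(c))+R(c)+\mathcal{O}_P(n^{-1/2}).$$ If in addition $R(c)=0$, this becomes $\mathrm{Cov}(c,\pi^*(c))+\mathcal{O}_P(n^{-1/2})$.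
   Context: $\mathrm{Regret}(c,\pi^*(\hat{\mathbb{E}}[c]))=\mathbb{E}[c^\top\pi^*(c)]-\mathbb{E}[c^\top\pi^*(\hat{\mathbb{E}}[c])]$; $\mathrm{Cov}(c,\pi^*(c))=\mathbb{E}[c^\top\pi^*(c)]-\mathbb{E}[c]^\top\mathbb{E}[\pi^*(c)]$; $R(c)=\mathbb{E}[c]^\top(\mathbb{E}[\pi^*(c)]-\pi^*(\mathbb{E}[c]))$; $\Sigma_c$ is the covariance matrix of $c$. *)

theory Defs
  imports "HOL-Probability.Probability"
begin

text \<open>Outer-probability bound: the (possibly non-measurable) event S is contained
  in a measurable event of probability at most e.\<close>
definition prob_le :: "'a measure \<Rightarrow> 'a set \<Rightarrow> real \<Rightarrow> bool" where
  "prob_le M S e \<longleftrightarrow> (\<exists>A\<in>sets M. S \<inter> space M \<subseteq> A \<and> measure M A \<le> e)"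

definition bigOP :: "'a measure \<Rightarrow> (nat \<Rightarrow> 'a \<Rightarrow> 'b::real_normed_vector) \<Rightarrow> (nat \<Rightarrow> real) \<Rightarrow> bool" where
  "bigOP M Y a \<longleftrightarrow> (\<forall>e>0. \<exists>K N0. \<forall>n\<ge>N0.
      prob_le M {\<omega> \<in> space M. norm (Y n \<omega>) > K * a n} e)"

definition conv_in_prob :: "'a measure \<Rightarrow> (nat \<Rightarrow> 'a \<Rightarrow> 'b::metric_space) \<Rightarrow> 'b \<Rightarrow> bool" where
  "conv_in_prob M Y y \<longleftrightarrow> (\<forall>e>0. \<forall>\<delta>>0. \<exists>N0. \<forall>n\<ge>N0.
      prob_le M {\<omega> \<in> space M. dist (Y n \<omega>) y > e} \<delta>)"

definition weak_conv_vec :: "(nat \<Rightarrow> (real^'d) measure) \<Rightarrow> (real^'d) measure \<Rightarrow> bool" where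
  "weak_conv_vec \<mu>s \<mu> \<longleftrightarrow> (\<forall>f :: real^'d \<Rightarrow> real. continuous_on UNIV f \<and> bounded (range f) \<longrightarrow>
      (\<lambda>n. integral\<^sup>L (\<mu>s n) f) \<longlonglongrightarrow> integral\<^sup>L \<mu> f)"

text \<open>Centered (possibly degenerate) multivariate normal law N(0, Sigma) on R^d,
  defined via its one-dimensional projections (Cramer--Wold): a.x ~ N(0, a' Sigma a).\<close>
definition is_mv_normal :: "(real^'d) measure \<Rightarrow> real^'d^'d \<Rightarrow> bool" where
  "is_mv_normal \<mu> \<Sigma> \<longleftrightarrow> prob_space \<mu> \<and> sets \<mu> = sets borel \<and>
     (\<forall>a. let v = a \<bullet> (\<Sigma> *v a) in
        distr \<mu> borel (\<lambda>x. a \<bullet> x) =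
          (if v = 0 then return borel 0 else density lborel (normal_density 0 (sqrt v))))"

definition cov_matrix :: "'a measure \<Rightarrow> ('a \<Rightarrow> real^'d) \<Rightarrow> real^'d^'d" where
  "cov_matrix M c = (\<chi> i j. integral\<^sup>L M (\<lambda>x. (c x $ i - integral\<^sup>L M (\<lambda>y. c y $ i)) *
                                               (c x $ j - integral\<^sup>L M (\<lambda>y. c y $ j))))"

text \<open>Regret of the plug-in decision pi(Ehat), conditional on the sample:
  E[c' pi(c)] - E_c[c' pi(Ehat)], with the estimate held fixed.\<close>
definition regret :: "'a measure \<Rightarrow> ('a \<Rightarrow> real^'d) \<Rightarrow> (real^'d \<Rightarrow> real^'d) \<Rightarrow> real^'d \<Rightarrow> real" where
  "regret M c \<pi> e = integral\<^sup>L M (\<lambda>x. c x \<bullet> \<pi> (c x)) - integral\<^sup>L M (\<lambda>x. c x \<bullet> \<pi> e)"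

definition Cov_term :: "'a measure \<Rightarrow> ('a \<Rightarrow> real^'d) \<Rightarrow> (real^'d \<Rightarrow> real^'d) \<Rightarrow> real" where
  "Cov_term M c \<pi> = integral\<^sup>L M (\<lambda>x. c x \<bullet> \<pi> (c x))
      - integral\<^sup>L M c \<bullet> integral\<^sup>L M (\<lambda>x. \<pi> (c x))"

definition R_term :: "'a measure \<Rightarrow> ('a \<Rightarrow> real^'d) \<Rightarrow> (real^'d \<Rightarrow> real^'d) \<Rightarrow> real" where
  "R_term M c \<pi> = integral\<^sup>L M c \<bullet> (integral\<^sup>L M (\<lambda>x. \<pi> (c x)) - \<pi> (integral\<^sup>L M c))"

end

theory Submission
  imports Defs
begin

theorem theorem3p10:
  fixes M :: "'a measure"
    and c :: "'a \<Rightarrow> real^'d"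
    and X :: "nat \<Rightarrow> 'a \<Rightarrow> real^'d"
    and Ehat :: "nat \<Rightarrow> 'a \<Rightarrow> real^'d"
    and C Z :: "(real^'d) set"
    and \<pi> :: "real^'d \<Rightarrow> real^'d"
    and L :: real
  assumes "prob_space M" and "complete_measure M"
    and "compact C" and "convex C"
    and "c \<in> borel_measurable M" and "\<forall>\<omega>\<in>space M. c \<omega> \<in> C"
    and "integrable M (\<lambda>\<omega>. (norm (c \<omega>))\<^sup>2)"
    and "absolutely_continuous lborel (distr M lborel c)"
    and "compact Z" and "Z \<noteq> {}"
    and "\<pi> ` C \<subseteq> Z"
    and "\<pi> \<in> borel_measurable (restrict_space borel C)"
    and "L-lipschitz_on C \<pi>"
    and "integrable M (\<lambda>\<omega>. (norm (\<pi> (c \<omega>)))\<^sup>2)"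
    and "AE \<omega> in M. \<forall>z\<in>Z. c \<omega> \<bullet> \<pi> (c \<omega>) \<le> c \<omega> \<bullet> z"
    \<comment> \<open>i.i.d. sample X 0, X 1, ..., distributed as c and independent of the fresh cost c\<close>
    and "\<forall>k. X k \<in> borel_measurable M"
    and "\<forall>k. distr M borel (X k) = distr M borel c"
    and "prob_space.indep_vars M (\<lambda>_. borel)
           (\<lambda>i. case i of None \<Rightarrow> c | Some k \<Rightarrow> X k) UNIV"
    \<comment> \<open>Ehat n is an estimator of E[c] based on the first n sample points\<close>
    and "\<forall>n. Ehat n \<in> borel_measurable M"
    and "\<forall>n. \<forall>\<omega>\<in>space M. \<forall>\<omega>'\<in>space M.
           (\<forall>i<n. X i \<omega> = X i \<omega>') \<longrightarrow> Ehat n \<omega> = Ehat n \<omega>'"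
    and "\<forall>n. \<forall>\<omega>\<in>space M. Ehat n \<omega> \<in> C"
    and "conv_in_prob M Ehat (integral\<^sup>L M c)"
    and "bigOP M (\<lambda>n \<omega>. Ehat n \<omega> - integral\<^sup>L M c) (\<lambda>n. 1 / sqrt (real n))"
    and "weak_conv_vec
           (\<lambda>n. distr M borel (\<lambda>\<omega>. sqrt (real n) *\<^sub>R (Ehat n \<omega> - integral\<^sup>L M c)))
           \<mu>"
    and "is_mv_normal \<mu> (cov_matrix M c)"
  shows "bigOP M (\<lambda>n \<omega>. regret M c \<pi> (Ehat n \<omega>) - Cov_term M c \<pi> - R_term M c \<pi>)
           (\<lambda>n. 1 / sqrt (real n))
       \<and> (R_term M c \<pi> = 0 \<longrightarrow>
          bigOP M (\<lambda>n \<omega>. regret M c \<pi> (Ehat n \<omega>) - Cov_term M c \<pi>)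
           (\<lambda>n. 1 / sqrt (real n)))"
proof -
  interpret P: prob_space M by (rule assms(1))
  define m where "m = integral\<^sup>L M c"
  have Cb: "bounded C" using assms(3) by (rule compact_imp_bounded)
  then obtain B where B: "\<And>x. x \<in> C \<Longrightarrow> norm x \<le> B" by (auto simp: bounded_iff)
  have intc: "integrable M c"
    by (rule P.integrable_const_bound[where B=B]) (use assms(5,6) B in auto)
  have L0: "0 \<le> L" using assms(13) by (rule lipschitz_on_nonneg)
  have mC: "m \<in> C"
  proof (rule ccontr)
    assume "m \<notin> C"
    have cl: "closed C" using assms(3) by (rule compact_imp_closed)
    obtain e where e: "e > 0" "\<And>y. y \<in> C \<Longrightarrow> e < dist y m"
    proof -
      have "open (- C)" using cl by auto
      then obtain e where "e > 0" "ball m e \<subseteq> - C"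
        using \<open>m \<notin> C\<close> open_contains_ball by blast
      then have "\<And>y. y \<in> C \<Longrightarrow> e/2 < dist y m"
        by (force simp: dist_commute subset_iff)
      then show ?thesis using \<open>e > 0\<close> by (intro that[of "e/2"]) auto
    qed
    have h: "\<forall>\<delta>>0. \<exists>N0. \<forall>n\<ge>N0. prob_le M {\<omega> \<in> space M. dist (Ehat n \<omega>) m > e} \<delta>"
      using assms(22) e(1) unfolding conv_in_prob_def m_def by blast
    have "\<exists>N0. \<forall>n\<ge>N0. prob_le M {\<omega> \<in> space M. dist (Ehat n \<omega>) m > e} (1/2)"
      using h[rule_format, of "1/2"] by simp
    then obtain N0 where N0: "\<forall>n\<ge>N0. prob_le M {\<omega> \<in> space M. dist (Ehat n \<omega>) m > e} (1/2)"
      by blast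
    then obtain A where A: "A \<in> sets M" "{\<omega> \<in> space M. dist (Ehat N0 \<omega>) m > e} \<inter> space M \<subseteq> A" "measure M A \<le> 1/2"
      unfolding prob_le_def by auto
    have "{\<omega> \<in> space M. dist (Ehat N0 \<omega>) m > e} = space M" using assms(21) e(2) by auto
    then have "A = space M" using A(1,2) sets.sets_into_space by blast
    then show False using A(3) by (simp add: P.prob_space)
  qed
  have key: "\<bar>regret M c \<pi> (Ehat n \<omega>) - Cov_term M c \<pi> - R_term M c \<pi>\<bar> \<le> (norm m * L) * norm (Ehat n \<omega> - m)"
    if "\<omega> \<in> space M" for n \<omega>
  proof -
    have eC: "Ehat n \<omega> \<in> C" using assms(21) that by auto
    have "regret M c \<pi> (Ehat n \<omega>) - Cov_term M c \<pi> - R_term M c \<pi> = m \<bullet> (\<pi> m - \<pi> (Ehat n \<omega>))"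
      unfolding regret_def Cov_term_def R_term_def m_def[symmetric] using intc
      by (simp add: m_def inner_diff_right)
    also have "\<bar>\<dots>\<bar> \<le> norm m * norm (\<pi> m - \<pi> (Ehat n \<omega>))" by (rule Cauchy_Schwarz_ineq2)
    also have "norm (\<pi> m - \<pi> (Ehat n \<omega>)) \<le> L * norm (Ehat n \<omega> - m)"
      using lipschitz_onD[OF assms(13) mC eC] by (simp add: dist_norm norm_minus_commute)
    finally show ?thesis by (simp add: mult_left_mono mult.assoc)
  qed
  have main: "bigOP M (\<lambda>n \<omega>. regret M c \<pi> (Ehat n \<omega>) - Cov_term M c \<pi> - R_term M c \<pi>) (\<lambda>n. 1 / sqrt (real n))"
    unfolding bigOP_def
  proof (intro allI impI)
    fix e :: real assume "e > 0"
    with assms(23) obtain K N0 where KN: "\<forall>n\<ge>N0. prob_le M {\<omega> \<in> space M. norm (Ehat n \<omega> - m) > K * (1 / sqrt (real n))} e"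
      unfolding bigOP_def m_def by blast
    show "\<exists>K N0. \<forall>n\<ge>N0. prob_le M {\<omega> \<in> space M. norm (regret M c \<pi> (Ehat n \<omega>) - Cov_term M c \<pi> - R_term M c \<pi>) > K * (1 / sqrt (real n))} e"
    proof (intro exI allI impI)
      fix n assume "N0 \<le> n"
      with KN obtain A where A: "A \<in> sets M" "{\<omega> \<in> space M. norm (Ehat n \<omega> - m) > K * (1 / sqrt (real n))} \<inter> space M \<subseteq> A" "measure M A \<le> e"
        unfolding prob_le_def by blast
      have "{\<omega> \<in> space M. norm (regret M c \<pi> (Ehat n \<omega>) - Cov_term M c \<pi> - R_term M c \<pi>) > (norm m * L * K) * (1 / sqrt (real n))} \<inter> space M \<subseteq> A"
      proof
        fix \<omega> assume w: "\<omega> \<in> {\<omega> \<in> space M. norm (regret M c \<pi> (Ehat n \<omega>) - Cov_term M c \<pi> - R_term M c \<pi>) > (norm m * L * K) * (1 / sqrt (real n))} \<inter> space M"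
        then have ws: "\<omega> \<in> space M" by auto
        have "(norm m * L) * (K * (1 / sqrt (real n))) < (norm m * L) * norm (Ehat n \<omega> - m)"
          using w key[OF ws, of n] by (simp add: mult.assoc)
        then have "K * (1 / sqrt (real n)) < norm (Ehat n \<omega> - m)"
          using L0 by (metis mult_left_less_imp_less norm_ge_zero zero_le_mult_iff)
        then show "\<omega> \<in> A" using A(2) ws by auto
      qed
      then show "prob_le M {\<omega> \<in> space M. norm (regret M c \<pi> (Ehat n \<omega>) - Cov_term M c \<pi> - R_term M c \<pi>) > (norm m * L * K) * (1 / sqrt (real n))} e"
        unfolding prob_le_def using A(1,3) by blast
    qed
  qed
  show ?thesis
  proof (intro conjI impI)
    show "bigOP M (\<lambda>n \<omega>. regret M c \<pi> (Ehat n \<omega>) - Cov_term M c \<pi> - R_term M c \<pi>) (\<lambda>n. 1 / sqrt (real n))"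
      by (rule main)
    assume "R_term M c \<pi> = 0"
    then show "bigOP M (\<lambda>n \<omega>. regret M c \<pi> (Ehat n \<omega>) - Cov_term M c \<pi>) (\<lambda>n. 1 / sqrt (real n))"
      using main by simp
  qed
qed

end
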